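(* Let $a,b,d>0$ and $c>c_-$, and let $\phi(x)=\frac{ax^3+bx^2+cx+d}{x^3}$, $x>0$. \begin{description} \item[(a)] If $\phi$ has a unique positive equilibrium $\overline{t}$, then $(\phi(t)-t)(t-\overline{t})<0$ for all $t>0$, $t\neq\overline{t}$. \item[(b)] If $\phi$ has two equilibria $\overline{t}_1<\overline{t}_2$, then for $c=c_M$ $$(\phi(t)-t)(t-\overline{t}_2)<0,\quad t>0,\ t\neq\overline{t}_1,\overline{t}_2,$$ and for $c=c_m$ $$(\phi(t)-t)(t-\overline{t}_1)<0,\quad t>0,\ t\neq\overline{t}_1,\overline{t}_2.$$ \item[(c)] If $\phi$ has three equilibria $\overline{t}_1<\overline{t}_2<\overline{t}_3$, then $$(\phi(t)-t)(t-\overline{t}_1)(t-\overline{t}_2)(t-\overline{t}_3)<0,\quad t>0,\ t\neq\overline{t}_1,\overline{t}_2,\overline{t}_3.$$ \end{description}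
   Context: $c_-$ is the unique negative zero of $Q(x)=4ax^3-b^2x^2-18abd\,x+27a^2d^2+4db^3$; the standing assumption $c>c_-$ guarantees that iterates of $\phi$ from positive points remain positive. Equilibria are points $t>0$ with $\phi(t)=t$, equivalently positive roots of $P(t)=t^4-at^3-bt^2-ct-d$. Let $c^*=-\sqrt{3bd}$ and let $c_b$ be the unique negative root of $H(x)=108x^2+(108ab+27a^3)x-9a^2b^2-32b^3$. When $c_b<\frac{b^2-12d}{3a}$, as the parameter $c$ increases from $c_b$ (with $a,b,d$ fixed), $P$ first acquires a positive double root $t_m$ located at a local minimum of $P$, and later a positive double root $t_M$ located at a local maximum of $P$; $c_m$ and $c_M$ denote the corresponding values of $c$ (one has $c_b<c_m<c_M<c^*$). Two equilibria occur only for $c=c_m$ or $c=c_M$ with $c\in(c_-,c^* )$. *)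

theory Defs
  imports Complex_Main
begin

definition phi :: "real \<Rightarrow> real \<Rightarrow> real \<Rightarrow> real \<Rightarrow> real \<Rightarrow> real" where
  "phi a b c d x = (a*x^3 + b*x^2 + c*x + d) / x^3"

definition Qpoly :: "real \<Rightarrow> real \<Rightarrow> real \<Rightarrow> real \<Rightarrow> real" where
  "Qpoly a b d x = 4*a*x^3 - b^2*x^2 - 18*a*b*d*x + 27*a^2*d^2 + 4*d*b^3"

definition c_minus :: "real \<Rightarrow> real \<Rightarrow> real \<Rightarrow> real" where
  "c_minus a b d = (THE x. x < 0 \<and> Qpoly a b d x = 0)"

definition Ppoly :: "real \<Rightarrow> real \<Rightarrow> real \<Rightarrow> real \<Rightarrow> real \<Rightarrow> real" where
  "Ppoly a b c d t = t^4 - a*t^3 - b*t^2 - c*t - d"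

definition equilibria :: "real \<Rightarrow> real \<Rightarrow> real \<Rightarrow> real \<Rightarrow> real set" where
  "equilibria a b c d = {t. t > 0 \<and> phi a b c d t = t}"

definition is_c_m :: "real \<Rightarrow> real \<Rightarrow> real \<Rightarrow> real \<Rightarrow> bool" where
  "is_c_m a b c d \<longleftrightarrow> (\<exists>t>0. Ppoly a b c d t = 0 \<and>
      4*t^3 - 3*a*t^2 - 2*b*t - c = 0 \<and>
      (\<exists>e>0. \<forall>s. \<bar>s - t\<bar> < e \<longrightarrow> Ppoly a b c d t \<le> Ppoly a b c d s))"

definition is_c_M :: "real \<Rightarrow> real \<Rightarrow> real \<Rightarrow> real \<Rightarrow> bool" where
  "is_c_M a b c d \<longleftrightarrow> (\<exists>t>0. Ppoly a b c d t = 0 \<and>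
      4*t^3 - 3*a*t^2 - 2*b*t - c = 0 \<and>
      (\<exists>e>0. \<forall>s. \<bar>s - t\<bar> < e \<longrightarrow> Ppoly a b c d s \<le> Ppoly a b c d t))"

end

theory Submission
  imports Defs
begin

definition Q1f :: "real \<Rightarrow> real \<Rightarrow> real \<Rightarrow> real \<Rightarrow> real \<Rightarrow> real" where
  "Q1f a b c x t = t^3 + (x - a)*t^2 + (x^2 - a*x - b)*t + (x^3 - a*x^2 - b*x - c)"

definition Q2f :: "real \<Rightarrow> real \<Rightarrow> real \<Rightarrow> real \<Rightarrow> real \<Rightarrow> real" where
  "Q2f a b x y t = t^2 + (x + y - a)*t + (y^2 + (x - a)*y + x^2 - a*x - b)"

lemma idP1: "Ppoly a b c d t - Ppoly a b c d x = (t - x) * Q1f a b c x t"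
  unfolding Ppoly_def Q1f_def by algebra

lemma idQ1: "Q1f a b c x t - Q1f a b c x y = (t - y) * Q2f a b x y t"
  unfolding Q1f_def Q2f_def by algebra

lemma idQ2: "Q2f a b x y t - Q2f a b x y z = (t - z) * (t + z + x + y - a)"
  unfolding Q2f_def by algebra

lemma two_roots:
  assumes "Ppoly a b c d t1 = 0" "Ppoly a b c d t2 = 0" "t1 \<noteq> t2"
  shows "Ppoly a b c d t = (t - t1) * (t - t2) * Q2f a b t1 t2 t"
proof -
  have "(t2 - t1) * Q1f a b c t1 t2 = 0" using idP1[of a b c d t2 t1] assms by simp
  hence q: "Q1f a b c t1 t2 = 0" using assms by simp
  have "Ppoly a b c d t = (t - t1) * Q1f a b c t1 t" using idP1[of a b c d t t1] assms by simp
  also have "Q1f a b c t1 t = (t - t2) * Q2f a b t1 t2 t" using idQ1[of a b c t1 t t2] q by simp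
  finally show ?thesis by simp
qed

lemma three_roots:
  assumes "Ppoly a b c d t1 = 0" "Ppoly a b c d t2 = 0" "Ppoly a b c d t3 = 0"
    "t1 \<noteq> t2" "t1 \<noteq> t3" "t2 \<noteq> t3"
  shows "Ppoly a b c d t = (t - t1) * (t - t2) * (t - t3) * (t + t3 + t1 + t2 - a)"
proof -
  have "(t3 - t1) * (t3 - t2) * Q2f a b t1 t2 t3 = 0"
    using two_roots[OF assms(1,2,4), of t3] assms by simp
  hence q: "Q2f a b t1 t2 t3 = 0" using assms by simp
  have "Ppoly a b c d t = (t - t1) * (t - t2) * Q2f a b t1 t2 t" using two_roots[OF assms(1,2,4)] .
  also have "Q2f a b t1 t2 t = (t - t3) * (t + t3 + t1 + t2 - a)" using idQ2[of a b t1 t2 t t3] q by simp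
  finally show ?thesis by simp
qed

lemma phiP: "t > 0 \<Longrightarrow> phi a b c d t - t = - Ppoly a b c d t / t^3"
  unfolding phi_def Ppoly_def by (simp add: field_simps power_def)

lemma eqP: "t \<in> equilibria a b c d \<longleftrightarrow> t > 0 \<and> Ppoly a b c d t = 0"
proof -
  have "t > 0 \<Longrightarrow> phi a b c d t = t \<longleftrightarrow> Ppoly a b c d t = 0"
    using phiP[of t a b c d] by (auto simp: field_simps)
  thus ?thesis unfolding equilibria_def by auto
qed

lemma contP: "isCont (\<lambda>x. Ppoly a b c d x) x"
  unfolding Ppoly_def by (intro continuous_intros)

lemma neg_stays:
  assumes "u < v" "Ppoly a b c d u < 0" "\<forall>x. u < x \<and> x \<le> v \<longrightarrow> Ppoly a b c d x \<noteq> 0"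
  shows "Ppoly a b c d v < 0"
proof (rule ccontr)
  assume "\<not> ?thesis"
  then obtain x where "u \<le> x" "x \<le> v" "Ppoly a b c d x = 0"
    using IVT[of "\<lambda>x. Ppoly a b c d x" u 0 v] assms contP by force
  thus False using assms by (cases "x = u") auto
qed

lemma pos_stays:
  assumes "u < v" "Ppoly a b c d v > 0" "\<forall>x. u \<le> x \<and> x < v \<longrightarrow> Ppoly a b c d x \<noteq> 0"
  shows "Ppoly a b c d u > 0"
proof (rule ccontr)
  assume "\<not> ?thesis"
  then obtain x where "u \<le> x" "x \<le> v" "Ppoly a b c d x = 0"
    using IVT[of "\<lambda>x. Ppoly a b c d x" u 0 v] assms contP by force
  thus False using assms by (cases "x = v") auto
qed

lemma big:
  fixes a b c d :: real
  assumes "a > 0" "b > 0" "d > 0"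
  shows "Ppoly a b c d (max t 1 + a + b + \<bar>c\<bar> + d) > 0"
proof -
  define M where "M = max t 1 + a + b + \<bar>c\<bar> + d"
  have M1: "M \<ge> 1" unfolding M_def using assms by auto
  have MK: "M > a + b + \<bar>c\<bar> + d" unfolding M_def using assms by auto
  have m2: "M^2 \<ge> M" using M1 by (simp add: power2_eq_square)
  have m3: "M^3 \<ge> M^2" using M1 by (simp add: power3_eq_cube power2_eq_square)
  have m3p: "M^3 > 0" using M1 by simp
  have "M^4 = M * M^3" by (simp add: power_def)
  also have "\<dots> > (a + b + \<bar>c\<bar> + d) * M^3" using MK m3p by simp
  finally have A: "M^4 > (a + b + \<bar>c\<bar> + d) * M^3" .
  have "b * M^2 \<le> b * M^3" using m3 assms by simp
  moreover have "\<bar>c\<bar> * M \<le> \<bar>c\<bar> * M^3" using m3 m2 by (simp add: mult_left_mono)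
  moreover have "d \<le> d * M^3" using m3 m2 M1 assms by simp
  moreover have "c * M \<le> \<bar>c\<bar> * M" using M1 by (simp add: mult_right_mono)
  ultimately have "a*M^3 + b*M^2 + c*M + d \<le> (a + b + \<bar>c\<bar> + d) * M^3"
    by (simp add: algebra_simps)
  with A show ?thesis unfolding M_def[symmetric] Ppoly_def by simp
qed


lemma partA:
  fixes a b c d :: real
  assumes "a > 0" "b > 0" "d > 0" "equilibria a b c d = {tb}" "t > 0" "t \<noteq> tb"
  shows "(phi a b c d t - t) * (t - tb) < 0"
proof -
  have E: "\<And>x. x > 0 \<Longrightarrow> Ppoly a b c d x = 0 \<Longrightarrow> x = tb"
    using assms(4) eqP by blast
  have tb: "tb > 0" "Ppoly a b c d tb = 0" using assms(4) eqP by blast+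
  have t3: "t^3 > 0" using assms by simp
  show ?thesis
  proof (cases "t < tb")
    case True
    have "Ppoly a b c d t < 0"
    proof (rule neg_stays[of 0])
      show "0 < t" using assms by simp
      show "Ppoly a b c d 0 < 0" using assms by (simp add: Ppoly_def)
      show "\<forall>x. 0 < x \<and> x \<le> t \<longrightarrow> Ppoly a b c d x \<noteq> 0"
        using True E by fastforce
    qed
    hence "phi a b c d t - t > 0" using phiP[of t a b c d] assms t3 by (simp add: divide_neg_pos)
    thus ?thesis using True by (simp add: mult_pos_neg)
  next
    case False
    hence T: "t > tb" using assms by simp
    define M where "M = max t 1 + a + b + \<bar>c\<bar> + d"
    have "Ppoly a b c d t > 0"
    proof (rule pos_stays[of _ M])
      show "t < M" unfolding M_def using assms by simp
      show "Ppoly a b c d M > 0" unfolding M_def by (rule big[OF assms(1-3)])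
      show "\<forall>x. t \<le> x \<and> x < M \<longrightarrow> Ppoly a b c d x \<noteq> 0"
      proof (intro allI impI)
        fix x assume x: "t \<le> x \<and> x < M"
        hence "x > 0" "x \<noteq> tb" using T tb(1) by auto
        thus "Ppoly a b c d x \<noteq> 0" using E by blast
      qed
    qed
    hence "phi a b c d t - t < 0" using phiP[of t a b c d] assms t3 by (simp add: divide_neg_pos)
    thus ?thesis using T by (simp add: mult_neg_pos)
  qed
qed

lemma partC:
  fixes a b c d :: real
  assumes "a > 0" "b > 0" "d > 0" "t1 < t2" "t2 < t3" "equilibria a b c d = {t1, t2, t3}"
    "t > 0" "t \<noteq> t1" "t \<noteq> t2" "t \<noteq> t3"
  shows "(phi a b c d t - t) * (t - t1) * (t - t2) * (t - t3) < 0"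
proof -
  have r: "t1 > 0 \<and> Ppoly a b c d t1 = 0" "t2 > 0 \<and> Ppoly a b c d t2 = 0" "t3 > 0 \<and> Ppoly a b c d t3 = 0"
    using assms(6) eqP by blast+
  have F: "\<And>x. Ppoly a b c d x = (x - t1) * (x - t2) * (x - t3) * (x + t3 + t1 + t2 - a)"
    using three_roots[of a b c d t1 t2 t3] r assms(4,5) by auto
  have "-d = - (t1*t2*t3) * (t3 + t1 + t2 - a)" using F[of 0] by (simp add: Ppoly_def)
  hence "t1*t2*t3 * (t3 + t1 + t2 - a) > 0" using assms by simp
  moreover have "t1*t2*t3 > 0" using r by simp
  ultimately have S: "t3 + t1 + t2 - a > 0" by (metis zero_less_mult_pos)
  define pr where "pr = (t - t1) * (t - t2) * (t - t3)"
  have pr: "pr^2 > 0" unfolding pr_def using assms by simp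
  have "(phi a b c d t - t) * (t - t1) * (t - t2) * (t - t3) = (phi a b c d t - t) * pr"
    unfolding pr_def by (simp add: mult.assoc)
  also have "\<dots> = - (pr^2 * (t + t3 + t1 + t2 - a)) / t^3"
  proof -
    have "Ppoly a b c d t = pr * (t + t3 + t1 + t2 - a)" using F[of t] unfolding pr_def by simp
    thus ?thesis using phiP[of t a b c d] assms by (simp add: power2_eq_square)
  qed
  also have "\<dots> < 0" using pr S assms by (simp add: divide_neg_pos)
  finally show ?thesis .
qed


lemma partB:
  fixes a b c d :: real
  assumes "a > 0" "b > 0" "d > 0" "t1 < t2" "equilibria a b c d = {t1, t2}"
  shows "(is_c_M a b c d \<longrightarrow>
           (\<forall>t>0. t \<noteq> t1 \<and> t \<noteq> t2 \<longrightarrow> (phi a b c d t - t) * (t - t2) < 0))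
      \<and> (is_c_m a b c d \<longrightarrow>
           (\<forall>t>0. t \<noteq> t1 \<and> t \<noteq> t2 \<longrightarrow> (phi a b c d t - t) * (t - t1) < 0))"
proof -
  have r: "t1 > 0 \<and> Ppoly a b c d t1 = 0" "t2 > 0 \<and> Ppoly a b c d t2 = 0"
    using assms(5) eqP by blast+
  have E: "\<And>x. x > 0 \<Longrightarrow> Ppoly a b c d x = 0 \<Longrightarrow> x = t1 \<or> x = t2"
    using assms(5) eqP by blast
  define p where "p = t1 + t2 - a"
  define q where "q = t2^2 + (t1 - a)*t2 + t1^2 - a*t1 - b"
  have Q: "\<And>x. Q2f a b t1 t2 x = x^2 + p*x + q" unfolding Q2f_def p_def q_def by (simp add: algebra_simps)
  have F2: "\<And>x. Ppoly a b c d x = (x - t1) * (x - t2) * (x^2 + p*x + q)"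
    using two_roots[of a b c d t1 t2] r assms(4) Q by auto
  have "-d = t1 * t2 * q" using F2[of 0] by (simp add: Ppoly_def)
  hence "t1 * t2 * q < 0" using assms by simp
  moreover have "t1 * t2 > 0" using r by simp
  ultimately have qn: "q < 0"
  proof -
    assume A: "t1 * t2 * q < 0" and B: "t1 * t2 > 0"
    show "q < 0"
    proof (rule ccontr)
      assume "\<not> q < 0"
      hence "t1 * t2 * q \<ge> 0" using B by simp
      thus False using A by simp
    qed
  qed
  define sd where "sd = sqrt (p^2 - 4*q)"
  have "p^2 - 4*q \<ge> 0" using qn zero_le_power2[of p] by linarith
  hence sd2: "sd^2 = p^2 - 4*q" unfolding sd_def by simp
  have "\<bar>p\<bar> = sqrt (p^2)" by simp
  also have "\<dots> < sd" unfolding sd_def using qn by (intro real_sqrt_less_mono) simp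
  finally have sdp: "\<bar>p\<bar> < sd" .
  define s where "s = (sd - p) / 2"
  define rr where "rr = (- p - sd) / 2"
  have s0: "s > 0" unfolding s_def using sdp by simp
  have r0: "rr < 0" unfolding rr_def using sdp by simp
  have fac: "\<And>x. x^2 + p*x + q = (x - s) * (x - rr)"
  proof -
    fix x
    have "(x - s) * (x - rr) = x^2 + p*x + (p^2 - sd^2)/4"
      unfolding s_def rr_def by (simp add: field_simps power2_eq_square)
    thus "x^2 + p*x + q = (x - s) * (x - rr)" using sd2 by simp
  qed
  have FF: "\<And>x. Ppoly a b c d x = (x - t1) * (x - t2) * ((x - s) * (x - rr))"
    using F2 fac by simp
  have "Ppoly a b c d s = 0" using FF[of s] by simp
  hence ss: "s = t1 \<or> s = t2" using E s0 by blast
  have t3: "\<And>t::real. t > 0 \<Longrightarrow> t^3 > 0" by simp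
  show ?thesis
  proof (cases "s = t1")
    case True
    have G: "\<And>x. Ppoly a b c d x = (x - t1)^2 * ((x - t2) * (x - rr))"
      using FF True by (simp add: power2_eq_square algebra_simps)
    have cM: "\<forall>t>0. t \<noteq> t1 \<and> t \<noteq> t2 \<longrightarrow> (phi a b c d t - t) * (t - t2) < 0"
    proof (intro allI impI)
      fix t assume t: "t > 0" "t \<noteq> t1 \<and> t \<noteq> t2"
      have h: "(phi a b c d t - t) * (t - t2) = - ((t - t1)^2 * (t - t2)^2 * (t - rr)) / t^3"
        using phiP[OF t(1), of a b c d] G[of t] by (simp add: power2_eq_square algebra_simps)
      have "(t - t1)^2 * (t - t2)^2 * (t - rr) > 0" using t r0 by simp
      thus "(phi a b c d t - t) * (t - t2) < 0" unfolding h using t3[OF t(1)] by (simp add: divide_neg_pos)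
    qed
    have cm: "\<not> is_c_m a b c d"
    proof
      assume "is_c_m a b c d"
      then obtain t0 e where t0: "t0 > 0" "Ppoly a b c d t0 = 0" "e > 0"
        "\<And>x. \<bar>x - t0\<bar> < e \<Longrightarrow> Ppoly a b c d t0 \<le> Ppoly a b c d x"
        unfolding is_c_m_def by blast
      have tt: "t0 = t1 \<or> t0 = t2" using E t0 by blast
      define dl where "dl = min e (min t1 (t2 - t1)) / 2"
      have dl: "dl > 0" "dl < e" "dl < t1" "dl < t2 - t1" unfolding dl_def using t0 r assms(4) by auto
      define x where "x = t0 - dl"
      have "Ppoly a b c d t0 \<le> Ppoly a b c d x" using t0(4)[of x] dl unfolding x_def by simp
      hence P0: "0 \<le> Ppoly a b c d x" using t0 by simp
      have xs: "x > 0" "x < t2" "x \<noteq> t1" using tt dl r unfolding x_def by auto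
      have "(x - t1)^2 > 0" using xs by simp
      moreover have "(x - t2) * (x - rr) < 0" using xs r0 by (simp add: mult_neg_pos)
      ultimately have "Ppoly a b c d x < 0" using G[of x] by (simp add: mult_pos_neg)
      thus False using P0 by simp
    qed
    show ?thesis using cM cm by blast
  next
    case False
    hence s2: "s = t2" using ss by simp
    have G: "\<And>x. Ppoly a b c d x = (x - t2)^2 * ((x - t1) * (x - rr))"
      using FF s2 by (simp add: power2_eq_square algebra_simps)
    have cm: "\<forall>t>0. t \<noteq> t1 \<and> t \<noteq> t2 \<longrightarrow> (phi a b c d t - t) * (t - t1) < 0"
    proof (intro allI impI)
      fix t assume t: "t > 0" "t \<noteq> t1 \<and> t \<noteq> t2"
      have h: "(phi a b c d t - t) * (t - t1) = - ((t - t2)^2 * (t - t1)^2 * (t - rr)) / t^3"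
        using phiP[OF t(1), of a b c d] G[of t] by (simp add: power2_eq_square algebra_simps)
      have "(t - t2)^2 * (t - t1)^2 * (t - rr) > 0" using t r0 by simp
      thus "(phi a b c d t - t) * (t - t1) < 0" unfolding h using t3[OF t(1)] by (simp add: divide_neg_pos)
    qed
    have cM: "\<not> is_c_M a b c d"
    proof
      assume "is_c_M a b c d"
      then obtain t0 e where t0: "t0 > 0" "Ppoly a b c d t0 = 0" "e > 0"
        "\<And>x. \<bar>x - t0\<bar> < e \<Longrightarrow> Ppoly a b c d x \<le> Ppoly a b c d t0"
        unfolding is_c_M_def by blast
      have tt: "t0 = t1 \<or> t0 = t2" using E t0 by blast
      define dl where "dl = min e (t2 - t1) / 2"
      have dl: "dl > 0" "dl < e" "dl < t2 - t1" unfolding dl_def using t0 assms(4) by auto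
      define x where "x = t0 + dl"
      have "Ppoly a b c d x \<le> Ppoly a b c d t0" using t0(4)[of x] dl unfolding x_def by simp
      hence P0: "Ppoly a b c d x \<le> 0" using t0 by simp
      have xs: "x > t1" "x \<noteq> t2" using tt dl r unfolding x_def by auto
      have "(x - t2)^2 > 0" using xs by simp
      moreover have "(x - t1) * (x - rr) > 0" using xs r0 r by simp
      ultimately have "Ppoly a b c d x > 0" using G[of x] by simp
      thus False using P0 by simp
    qed
    show ?thesis using cM cm by blast
  qed
qed

theorem theorem3:
  fixes a b c d :: real
  assumes "a > 0" and "b > 0" and "d > 0" and "c > c_minus a b d"
  shows
   "(\<forall>tb. equilibria a b c d = {tb} \<longrightarrow>
        (\<forall>t>0. t \<noteq> tb \<longrightarrow> (phi a b c d t - t) * (t - tb) < 0))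
    \<and> (\<forall>t1 t2. t1 < t2 \<and> equilibria a b c d = {t1, t2} \<longrightarrow>
        (is_c_M a b c d \<longrightarrow>
           (\<forall>t>0. t \<noteq> t1 \<and> t \<noteq> t2 \<longrightarrow> (phi a b c d t - t) * (t - t2) < 0))
      \<and> (is_c_m a b c d \<longrightarrow>
           (\<forall>t>0. t \<noteq> t1 \<and> t \<noteq> t2 \<longrightarrow> (phi a b c d t - t) * (t - t1) < 0)))
    \<and> (\<forall>t1 t2 t3. t1 < t2 \<and> t2 < t3 \<and> equilibria a b c d = {t1, t2, t3} \<longrightarrow>
        (\<forall>t>0. t \<noteq> t1 \<and> t \<noteq> t2 \<and> t \<noteq> t3 \<longrightarrow>
           (phi a b c d t - t) * (t - t1) * (t - t2) * (t - t3) < 0))"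
proof -
  have A: "\<forall>tb. equilibria a b c d = {tb} \<longrightarrow>
        (\<forall>t>0. t \<noteq> tb \<longrightarrow> (phi a b c d t - t) * (t - tb) < 0)"
    using partA[OF assms(1-3)] by blast
  have B: "\<forall>t1 t2. t1 < t2 \<and> equilibria a b c d = {t1, t2} \<longrightarrow>
        (is_c_M a b c d \<longrightarrow>
           (\<forall>t>0. t \<noteq> t1 \<and> t \<noteq> t2 \<longrightarrow> (phi a b c d t - t) * (t - t2) < 0))
      \<and> (is_c_m a b c d \<longrightarrow>
           (\<forall>t>0. t \<noteq> t1 \<and> t \<noteq> t2 \<longrightarrow> (phi a b c d t - t) * (t - t1) < 0))"
    using partB[OF assms(1-3)] by blast
  have C: "\<forall>t1 t2 t3. t1 < t2 \<and> t2 < t3 \<and> equilibria a b c d = {t1, t2, t3} \<longrightarrow>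
        (\<forall>t>0. t \<noteq> t1 \<and> t \<noteq> t2 \<and> t \<noteq> t3 \<longrightarrow>
           (phi a b c d t - t) * (t - t1) * (t - t2) * (t - t3) < 0)"
    using partC[OF assms(1-3)] by blast
  show ?thesis using A B C by (intro conjI)
qed

end
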